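(* Let $n=1$, let $k\ge 2$ be an integer and $p=1/k$. There exist constants $C_k>0$ and $C_k'>0$ such that for every $0<r<2^{1-k}$ and every $c\in[0,1]$ there is a measurable function $a$ on $\mathbb R$ with: $\operatorname{supp} a\subset B_r:=[-2^{k-2}r,2^{k-2}r]$; $\|a\|_{L^\infty}\le (2^{k-2}r)^{-k}=r(B_r)^{-1/p}$; $\int a(t)t^{\ell}dt=0$ for $0\le\ell\le k-2$; $\int a(t)t^{k-1}dt=C_k\,c$; and $$c\,|\log r|\le C_k'\big(1+\|a\|_{h^{1/k}(\mathbb R)}\big).$$ In particular, for $p=1/k$ a uniform bound on the moment of order $N_p=k-1$, together with the support and size conditions of an atom and vanishing lower moments, does not imply a uniform bound on the $h^p$ quasi-norm; a decay of order $O(1/|\log r|)$ of the top moment is necessary for such a uniform bound.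
   Context: Local Hardy space: fix $\phi\in\mathcal S(\mathbb R^n)$ with $\int\phi\neq 0$, put $\phi_t(x)=t^{-n}\phi(x/t)$; for a tempered distribution $f$ let $m_\phi f(x)=\sup_{0<t<1}|f*\phi_t(x)|$ and $\|f\|_{h^p}=\|m_\phi f\|_{L^p(\mathbb R^n)}$; $h^p(\mathbb R^n)$ is the set of $f$ with $\|f\|_{h^p}<\infty$. Here $n=1$, $r(B_r)=2^{k-2}r$ is the radius of $B_r$, and $N_p=\lfloor \gamma_p\rfloor$ with $\gamma_p=1/p-1=k-1$. *)

theory Defs
  imports "HOL-Analysis.Analysis"
begin

fun iter_vderiv :: "(real \<Rightarrow> complex) \<Rightarrow> nat \<Rightarrow> real \<Rightarrow> complex" where
  "iter_vderiv f 0 = f"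
| "iter_vderiv f (Suc m) = (\<lambda>x. vector_derivative (iter_vderiv f m) (at x))"

definition schwartz :: "(real \<Rightarrow> complex) \<Rightarrow> bool" where
  "schwartz f \<longleftrightarrow>
     (\<forall>m x. iter_vderiv f m differentiable (at x)) \<and>
     (\<forall>m j. \<exists>B. \<forall>x. \<bar>x\<bar> ^ j * cmod (iter_vderiv f m x) \<le> B)"

definition dil :: "(real \<Rightarrow> complex) \<Rightarrow> real \<Rightarrow> real \<Rightarrow> complex" where
  "dil \<phi> t x = complex_of_real (1 / t) * \<phi> (x / t)"

definition conv_dil :: "(real \<Rightarrow> real) \<Rightarrow> (real \<Rightarrow> complex) \<Rightarrow> real \<Rightarrow> real \<Rightarrow> complex" where
  "conv_dil f \<phi> t x = (LINT y|lborel. complex_of_real (f y) * dil \<phi> t (x - y))"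

definition loc_max :: "(real \<Rightarrow> complex) \<Rightarrow> (real \<Rightarrow> real) \<Rightarrow> real \<Rightarrow> ennreal" where
  "loc_max \<phi> f x = (SUP t\<in>{0<..<1}. ennreal (cmod (conv_dil f \<phi> t x)))"

definition enn_powr :: "ennreal \<Rightarrow> real \<Rightarrow> ennreal" where
  "enn_powr x q = (if x = top then top else ennreal (enn2real x powr q))"

definition hp_norm :: "(real \<Rightarrow> complex) \<Rightarrow> real \<Rightarrow> (real \<Rightarrow> real) \<Rightarrow> ennreal" where
  "hp_norm \<phi> p f = enn_powr (\<integral>\<^sup>+ x. enn_powr (loc_max \<phi> f x) p \<partial>lborel) (1 / p)"

end

theory Submission
  imports Defs
begin


fun fd :: "real \<Rightarrow> real \<Rightarrow> nat \<Rightarrow> real \<Rightarrow> real" where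
  "fd R d 0 y = indicator {-R ..< -R + d} y"
| "fd R d (Suc m) y = fd R d m y - fd R d m (y - d)"

lemma fd_meas[measurable]: "fd R d m \<in> borel_measurable borel"
proof (induction m)
  case 0 then show ?case by simp
next
  case (Suc m)
  have "(\<lambda>y. fd R d m (y - d)) \<in> borel_measurable borel"
  proof -
    have "(\<lambda>y::real. y - d) \<in> borel_measurable borel" by simp
    from measurable_compose[OF this Suc] show ?thesis by (simp add: comp_def)
  qed
  then show ?case using Suc by (simp add: borel_measurable_diff[OF Suc])
qed

lemma fd_supp: "d > 0 \<Longrightarrow> fd R d m y \<noteq> 0 \<Longrightarrow> -R \<le> y \<and> y < -R + (real m + 1) * d"
proof (induction m arbitrary: y)
  case 0 then show ?case by (auto simp: indicator_def split: if_splits)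
next
  case (Suc m)
  then have "fd R d m y \<noteq> 0 \<or> fd R d m (y - d) \<noteq> 0" by auto
  then show ?case
  proof
    assume "fd R d m y \<noteq> 0" from Suc.IH[OF Suc.prems(1) this] Suc.prems(1) show ?thesis by (auto simp: algebra_simps)
  next
    assume "fd R d m (y - d) \<noteq> 0" from Suc.IH[OF Suc.prems(1) this] Suc.prems(1) show ?thesis by (auto simp: algebra_simps)
  qed
qed

lemma fd_bound: "\<bar>fd R d m y\<bar> \<le> 2 ^ m"
proof (induction m arbitrary: y)
  case 0 then show ?case by (auto simp: indicator_def)
next
  case (Suc m)
  have "\<bar>fd R d m y - fd R d m (y - d)\<bar> \<le> 2^m + 2^m" using Suc[of y] Suc[of "y-d"] by linarith
  then show ?case by simp
qed

lemma emeasure_Icc_fin: "emeasure lborel {A..B::real} < top"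
  by (cases "A \<le> B") auto

lemma integrable_cpt:
  fixes f :: "real \<Rightarrow> 'a::{banach,second_countable_topology}"
  assumes hm: "h \<in> borel_measurable borel" and hs: "\<And>y. h y \<noteq> 0 \<Longrightarrow> y \<in> {A..B}"
    and hb: "\<And>y. \<bar>h y\<bar> \<le> K" and fc: "continuous_on UNIV f"
  shows "integrable lborel (\<lambda>y. h y *\<^sub>R f y)"
proof -
  have "compact (f ` {A..B})" by (rule compact_continuous_image[OF continuous_on_subset[OF fc]]) auto
  then obtain Mf where Mf: "\<And>y. y \<in> {A..B} \<Longrightarrow> norm (f y) \<le> Mf"
    using compact_imp_bounded bounded_iff by (metis image_eqI)
  have fm: "f \<in> borel_measurable borel" using fc borel_measurable_continuous_onI by blast
  show ?thesis
  proof (rule Bochner_Integration.integrable_bound)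
    show "integrable lborel (\<lambda>y. (K * Mf) * indicator {A..B} y)"
      by (intro integrable_mult_right integrable_real_indicator) (auto simp: emeasure_Icc_fin)
    show "(\<lambda>y. h y *\<^sub>R f y) \<in> borel_measurable lborel" using hm fm by simp
    show "AE x in lborel. norm (h x *\<^sub>R f x) \<le> norm ((K * Mf) * indicator {A..B} x :: real)"
    proof (rule AE_I2)
      fix x
      show "norm (h x *\<^sub>R f x) \<le> norm ((K * Mf) * indicator {A..B} x :: real)"
      proof (cases "h x = 0")
        case True then show ?thesis by simp
      next
        case False
        then have x: "x \<in> {A..B}" using hs by auto
        have "norm (h x *\<^sub>R f x) = \<bar>h x\<bar> * norm (f x)" by simp
        also have "\<dots> \<le> K * Mf" using hb[of x] Mf[OF x] by (intro mult_mono) auto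
        finally show ?thesis using x hb[of x] Mf[OF x] by (simp add: indicator_def)
      qed
    qed
  qed
qed



definition fmom :: "real \<Rightarrow> real \<Rightarrow> nat \<Rightarrow> nat \<Rightarrow> real" where
  "fmom R d m l = (LINT y|lborel. fd R d m y * y ^ l)"

lemma fd_int: "d > 0 \<Longrightarrow> continuous_on UNIV f \<Longrightarrow> integrable lborel (\<lambda>y. fd R d m y * (f y :: real))"
  using integrable_cpt[of "fd R d m" "-R" "-R + (real m + 1) * d" "2^m" f] fd_supp[of d R m] fd_bound[of R d m]
  by (auto simp: less_imp_le)

lemma fd_shift: "(LINT y|lborel. fd R d m (y - d) * y ^ l) = (LINT y|lborel. fd R d m y * (y + d) ^ l)"
  using lborel_integral_real_affine[of 1 "\<lambda>y. fd R d m (y - d) * y ^ l" d]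
  by (simp add: add.commute)

lemma fmom_step:
  assumes d: "d > 0"
  shows "fmom R d (Suc m) l = - (\<Sum>i<l. of_nat (l choose i) * d ^ (l - i) * fmom R d m i)"
proof -
  have i1: "integrable lborel (\<lambda>y. fd R d n y * y ^ l)" for l n
    by (rule fd_int[OF d]) (intro continuous_intros)
  have i2: "integrable lborel (\<lambda>y. fd R d m (y - d) * y ^ l)"
  proof -
    have "(\<lambda>y. fd R d m (y - d) * y ^ l) = (\<lambda>y. fd R d m y * y ^ l - fd R d (Suc m) y * y ^ l)"
      by (auto simp: algebra_simps)
    show ?thesis unfolding \<open>(\<lambda>y. fd R d m (y - d) * y ^ l) = _\<close>
      by (rule Bochner_Integration.integrable_diff[OF i1 i1])
  qed
  have "fmom R d (Suc m) l = fmom R d m l - (LINT y|lborel. fd R d m (y - d) * y ^ l)"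
  proof -
    have "(\<lambda>y. fd R d (Suc m) y * y ^ l) = (\<lambda>y. fd R d m y * y ^ l - fd R d m (y - d) * y ^ l)"
      by (auto simp: algebra_simps)
    then show ?thesis unfolding fmom_def using i1 i2 by simp
  qed
  also have "(LINT y|lborel. fd R d m (y - d) * y ^ l) = (\<Sum>i\<le>l. of_nat (l choose i) * d ^ (l - i) * fmom R d m i)"
  proof -
    have "(LINT y|lborel. fd R d m y * (y + d) ^ l) = (LINT y|lborel. (\<Sum>i\<le>l. of_nat (l choose i) * d ^ (l - i) * (fd R d m y * y ^ i)))"
      by (intro Bochner_Integration.integral_cong refl) (simp add: binomial_ring sum_distrib_left algebra_simps)
    also have "\<dots> = (\<Sum>i\<le>l. of_nat (l choose i) * d ^ (l - i) * fmom R d m i)"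
      unfolding fmom_def using i1 by (subst Bochner_Integration.integral_sum) auto
    finally show ?thesis using fd_shift by simp
  qed
  also have "(\<Sum>i\<le>l. of_nat (l choose i) * d ^ (l - i) * fmom R d m i) = (\<Sum>i<l. of_nat (l choose i) * d ^ (l - i) * fmom R d m i) + fmom R d m l"
    by (simp add: lessThan_Suc_atMost[symmetric])
  finally show ?thesis by simp
qed

lemma fmom_main:
  assumes d: "d > 0"
  shows "(\<forall>l<m. fmom R d m l = 0) \<and> fmom R d m m = (-d) ^ m * fact m * d"
proof (induction m)
  case 0
  have "fmom R d 0 0 = d" unfolding fmom_def using d by simp
  then show ?case by simp
next
  case (Suc m)
  have A: "\<forall>l<Suc m. fmom R d (Suc m) l = 0"
  proof (intro allI impI)
    fix l assume "l < Suc m"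
    then show "fmom R d (Suc m) l = 0" using Suc fmom_step[OF d, of R m l] by simp
  qed
  have "fmom R d (Suc m) (Suc m) = - (\<Sum>i<Suc m. of_nat (Suc m choose i) * d ^ (Suc m - i) * fmom R d m i)"
    by (rule fmom_step[OF d])
  also have "\<dots> = - (of_nat (Suc m) * d * fmom R d m m)"
    using Suc by simp
  also have "\<dots> = (-d) ^ Suc m * fact (Suc m) * d" using Suc by (simp add: algebra_simps)
  finally show ?case using A by simp
qed



lemma vd:
  assumes "schwartz \<phi>"
  shows "(iter_vderiv \<phi> m has_vector_derivative iter_vderiv \<phi> (Suc m) x) (at x)"
  using assms unfolding schwartz_def by (simp add: vector_derivative_works[symmetric])

lemma vd_cont: "schwartz \<phi> \<Longrightarrow> continuous_on UNIV (iter_vderiv \<phi> m)"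
  by (metis continuous_at_imp_continuous_on has_vector_derivative_continuous vd)

lemma zero_step:
  assumes S: "schwartz \<phi>" and z: "\<forall>x. iter_vderiv \<phi> (Suc m) x = 0"
  shows "\<forall>x. iter_vderiv \<phi> m x = 0"
proof -
  have "\<And>x. x \<in> UNIV \<Longrightarrow> (iter_vderiv \<phi> m has_vector_derivative 0) (at x within UNIV)"
    using vd[OF S, of m] z by metis
  then obtain c where c: "\<And>x. iter_vderiv \<phi> m x = c"
    using has_vector_derivative_zero_constant[of UNIV "iter_vderiv \<phi> m"] by auto
  obtain B where B: "\<And>x. \<bar>x\<bar> ^ 1 * cmod (iter_vderiv \<phi> m x) \<le> B"
    using S unfolding schwartz_def by blast
  have "c = 0"
  proof (rule ccontr)
    assume "c \<noteq> 0"
    then have cp: "cmod c > 0" by simp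
    define x where "x = (\<bar>B\<bar> + 1) / cmod c"
    have "\<bar>x\<bar> * cmod c = \<bar>B\<bar> + 1" using cp unfolding x_def by (simp add: field_simps)
    then show False using B[of x] c[of x] by simp
  qed
  then show ?thesis using c by simp
qed

lemma nonvanish:
  assumes S: "schwartz \<phi>" and I: "integral\<^sup>L lborel \<phi> \<noteq> 0"
  shows "\<exists>s. s \<noteq> 0 \<and> iter_vderiv \<phi> n s \<noteq> 0"
proof (rule ccontr)
  assume "\<not> ?thesis"
  then have h: "\<And>s. s \<noteq> 0 \<Longrightarrow> iter_vderiv \<phi> n s = 0" by auto
  have "iter_vderiv \<phi> n 0 = 0"
  proof -
    have c: "((iter_vderiv \<phi> n) \<longlongrightarrow> iter_vderiv \<phi> n 0) (at 0)"
      using vd_cont[OF S, of n] by (simp add: continuous_on_def)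
    have "((iter_vderiv \<phi> n) \<longlongrightarrow> 0) (at (0::real))"
    proof (rule tendsto_eventually)
      show "\<forall>\<^sub>F x in at (0::real). iter_vderiv \<phi> n x = 0"
        using h by (auto simp: eventually_at_filter)
    qed
    from tendsto_unique[OF _ c this] show ?thesis by simp
  qed
  with h have all: "\<forall>x. iter_vderiv \<phi> n x = 0" by metis
  have "\<forall>x. iter_vderiv \<phi> 0 x = 0"
  proof -
    have "(\<forall>x. iter_vderiv \<phi> j x = 0) \<longrightarrow> (\<forall>x. iter_vderiv \<phi> 0 x = 0)" for j
    proof (induction j)
      case 0 then show ?case by simp
    next
      case (Suc j) then show ?case using zero_step[OF S, of j] by blast
    qed
    then show ?thesis using all by blast
  qed
  then have "\<phi> = (\<lambda>x. 0)" by auto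
  then show False using I by simp
qed

definition gd :: "complex \<Rightarrow> (real \<Rightarrow> complex) \<Rightarrow> nat \<Rightarrow> real \<Rightarrow> real" where
  "gd w \<phi> m x = Re (w * iter_vderiv \<phi> m x)"

lemma gd_deriv: "schwartz \<phi> \<Longrightarrow> DERIV (gd w \<phi> m) x :> gd w \<phi> (Suc m) x"
proof -
  assume S: "schwartz \<phi>"
  have bl: "bounded_linear (\<lambda>z. Re (w * z))"
    using bounded_linear_compose[OF bounded_linear_Re bounded_linear_mult_right[of w]] by simp
  show ?thesis unfolding has_real_derivative_iff_has_vector_derivative gd_def
    using bounded_linear.has_vector_derivative[OF bl vd[OF S]] by simp
qed

lemma taylor_bound:
  fixes g :: "nat \<Rightarrow> real \<Rightarrow> real"
  assumes D: "\<And>m x. DERIV (g m) x :> g (Suc m) x" and B: "\<And>x. \<bar>g n x\<bar> \<le> M"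
  shows "\<bar>g 0 (s + v) - (\<Sum>m<n. g m s / fact m * v ^ m)\<bar> \<le> M * \<bar>v\<bar> ^ n"
proof -
  have D': "\<forall>m x. DERIV (\<lambda>x. g m (x + s)) x :> g (Suc m) (x + s)"
    using D DERIV_shift by blast
  obtain t where t: "g 0 (v + s) = (\<Sum>m<n. g m (0 + s) / fact m * v ^ m) + g n (t + s) / fact n * v ^ n"
    using Maclaurin_all_le[of "\<lambda>m x. g m (x + s)" "\<lambda>x. g 0 (x + s)", OF refl D', of v n] by auto
  have "\<bar>g n (t + s) / fact n * v ^ n\<bar> = \<bar>g n (t + s)\<bar> / fact n * \<bar>v\<bar> ^ n"
    by (simp add: abs_mult power_abs)
  also have "\<dots> \<le> \<bar>g n (t + s)\<bar> * \<bar>v\<bar> ^ n"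
  proof -
    have "\<bar>g n (t + s)\<bar> / fact n \<le> \<bar>g n (t + s)\<bar>"
      by (simp add: divide_le_eq fact_ge_1 mult_le_cancel_left1)
    then show ?thesis by (intro mult_right_mono) auto
  qed
  also have "\<dots> \<le> M * \<bar>v\<bar> ^ n" using B by (intro mult_right_mono) auto
  finally show ?thesis using t by (simp add: add.commute)
qed



lemma cmod_Re_bound: "cmod w \<le> 1 \<Longrightarrow> \<bar>Re (w * z)\<bar> \<le> cmod z"
proof -
  assume "cmod w \<le> 1"
  then have "cmod (w * z) \<le> cmod z" by (simp add: norm_mult mult_left_le_one_le)
  then show ?thesis using abs_Re_le_cmod[of "w*z"] by linarith
qed

lemma conv_lower:
  fixes a :: "real \<Rightarrow> real"
  assumes S: "schwartz \<phi>" and am: "a \<in> borel_measurable borel"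
    and asupp: "\<And>y. a y \<noteq> 0 \<Longrightarrow> y \<in> {-R..R}" and ab: "\<And>y. \<bar>a y\<bar> \<le> K"
    and n: "n \<ge> 1" and R: "R \<ge> 0"
    and mom: "\<And>l. l < n \<Longrightarrow> (LINT y|lborel. a y * y ^ l) = (if l = n - 1 then \<mu> else 0)"
    and w: "cmod w \<le> 1" and MB: "\<And>x. cmod (iter_vderiv \<phi> n x) \<le> M"
    and t: "t > 0"
  shows "cmod (conv_dil a \<phi> t (s * t)) \<ge>
     (1/t) * (\<bar>gd w \<phi> (n-1) s / fact (n-1) * (-1/t)^(n-1) * \<mu>\<bar> - K * M * (R/t)^n * (2*R))"
proof -
  define g where "g = gd w \<phi>"
  define v where "v y = s + (-1/t) * y" for y
  have K: "K \<ge> 0" using ab[of 0] by linarith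
  have M: "M \<ge> 0" using MB[of 0] norm_ge_zero order_trans by blast
  have gD: "\<And>m x. DERIV (g m) x :> g (Suc m) x" unfolding g_def using gd_deriv[OF S] by blast
  have gc: "\<And>m. continuous_on UNIV (\<lambda>y. g m (v y))"
    unfolding v_def
    by (intro continuous_at_imp_continuous_on ballI isCont_o2[OF _ DERIV_isCont[OF gD]]) (intro continuous_intros)
  have phic: "continuous_on UNIV (\<lambda>y. \<phi> (v y))"
  proof -
    have "continuous_on UNIV \<phi>" using vd_cont[OF S, of 0] by simp
    then show ?thesis unfolding v_def
    proof (rule continuous_on_compose2[of UNIV])
      show "continuous_on UNIV (\<lambda>y. s + - 1 / t * y)" by (intro continuous_intros)
    qed auto
  qed
  have aint: "integrable lborel (\<lambda>y. a y * f y)" if "continuous_on UNIV f" for f :: "real \<Rightarrow> real"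
    using integrable_cpt[OF am asupp ab that] by simp
  define I where "I = (LINT y|lborel. complex_of_real (a y) * \<phi> (v y))"
  have Iint: "integrable lborel (\<lambda>y. complex_of_real (a y) * \<phi> (v y))"
    using integrable_cpt[OF am asupp ab phic, unfolded scaleR_conv_of_real] .
  have conv_eq: "conv_dil a \<phi> t (s * t) = complex_of_real (1/t) * I"
  proof -
    have "\<And>y. (s * t - y) / t = v y" unfolding v_def using t by (simp add: field_simps)
    then have "conv_dil a \<phi> t (s * t) = (LINT y|lborel. complex_of_real (1/t) * (complex_of_real (a y) * \<phi> (v y)))"
      unfolding conv_dil_def dil_def by (simp add: mult.left_commute)
    then show ?thesis unfolding I_def by simp
  qed
  have ReI: "Re (w * I) = (LINT y|lborel. a y * g 0 (v y))"
  proof -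
    have bl: "bounded_linear (\<lambda>z. Re (w * z))"
      using bounded_linear_compose[OF bounded_linear_Re bounded_linear_mult_right[of w]] by simp
    have "Re (w * I) = (LINT y|lborel. Re (w * (complex_of_real (a y) * \<phi> (v y))))"
      unfolding I_def using integral_bounded_linear[OF bl Iint] by simp
    also have "\<dots> = (LINT y|lborel. a y * g 0 (v y))"
      unfolding g_def gd_def by (simp add: algebra_simps)
    finally show ?thesis .
  qed
  define c where "c m = g m s / fact m * (-1/t) ^ m" for m
  define P where "P y = (\<Sum>m<n. c m * y ^ m)" for y
  define E where "E y = g 0 (v y) - P y" for y
  have Pc: "continuous_on UNIV P" unfolding P_def by (intro continuous_intros)
  have Ec: "continuous_on UNIV E" unfolding E_def using gc Pc by (intro continuous_intros) auto
  have Ebound: "\<bar>E y\<bar> \<le> M * \<bar>(-1/t) * y\<bar> ^ n" for y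
  proof -
    have gb: "\<And>x. \<bar>g n x\<bar> \<le> M" unfolding g_def gd_def using cmod_Re_bound[OF w] MB order_trans by blast
    have "P y = (\<Sum>m<n. g m s / fact m * ((-1/t) * y) ^ m)"
      unfolding P_def c_def by (intro sum.cong refl) (simp only: power_mult_distrib mult.assoc)
    then show ?thesis unfolding E_def v_def using taylor_bound[OF gD gb, of s "(-1/t) * y"] by simp
  qed
  have split: "(LINT y|lborel. a y * g 0 (v y)) = (LINT y|lborel. a y * P y) + (LINT y|lborel. a y * E y)"
  proof -
    have "(\<lambda>y. a y * g 0 (v y)) = (\<lambda>y. a y * P y + a y * E y)" unfolding E_def by (auto simp: algebra_simps)
    then show ?thesis using aint[OF Pc] aint[OF Ec] by simp
  qed
  have Pint: "(LINT y|lborel. a y * P y) = c (n - 1) * \<mu>"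
  proof -
    have mi: "\<And>m. integrable lborel (\<lambda>y. a y * y ^ m)" by (rule aint) (intro continuous_intros)
    have "(LINT y|lborel. a y * P y) = (LINT y|lborel. (\<Sum>m<n. c m * (a y * y ^ m)))"
      unfolding P_def by (simp add: sum_distrib_left algebra_simps)
    also have "\<dots> = (\<Sum>m<n. c m * (LINT y|lborel. a y * y ^ m))"
      using mi by (subst Bochner_Integration.integral_sum) auto
    also have "\<dots> = (\<Sum>m<n. if m = n - 1 then c m * \<mu> else 0)"
      using mom by (intro sum.cong refl) auto
    also have "\<dots> = c (n - 1) * \<mu>" using n by (simp add: sum.delta')
    finally show ?thesis .
  qed
  have Eint: "\<bar>LINT y|lborel. a y * E y\<bar> \<le> K * M * (R/t)^n * (2*R)"
  proof -
    have "norm (LINT y|lborel. a y * E y) \<le> (LINT y|lborel. (K * M * (R/t)^n) * indicator {-R..R} y)"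
    proof (rule Bochner_Integration.integral_norm_bound_integral)
      show "integrable lborel (\<lambda>y. a y * E y)" by (rule aint[OF Ec])
      show "integrable lborel (\<lambda>y. (K * M * (R/t)^n) * indicator {-R..R} y)"
        by (intro integrable_mult_right integrable_real_indicator) (auto simp: emeasure_Icc_fin)
      fix y
      show "norm (a y * E y) \<le> (K * M * (R/t)^n) * indicator {-R..R} y"
      proof (cases "a y = 0")
        case True then show ?thesis using K M R t by (simp add: indicator_def)
      next
        case False
        then have y: "y \<in> {-R..R}" using asupp by auto
        have "\<bar>(-1/t) * y\<bar> \<le> R/t" using y t by (simp add: abs_mult divide_right_mono abs_le_iff)
        then have "\<bar>(-1/t) * y\<bar> ^ n \<le> (R/t) ^ n" by (intro power_mono) auto
        then have "\<bar>E y\<bar> \<le> M * (R/t)^n" using Ebound[of y] M by (meson mult_left_mono order_trans)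
        then have "\<bar>a y\<bar> * \<bar>E y\<bar> \<le> K * (M * (R/t)^n)" using ab[of y] K by (intro mult_mono) auto
        then show ?thesis using y by (simp add: abs_mult)
      qed
    qed
    also have "\<dots> = K * M * (R/t)^n * (2*R)" using R by simp
    finally show ?thesis by simp
  qed
  have "Re (w * conv_dil a \<phi> t (s * t)) = (1/t) * (c (n - 1) * \<mu> + (LINT y|lborel. a y * E y))"
    using conv_eq ReI split Pint by (simp add: mult.left_commute)
  moreover have "\<bar>Re (w * conv_dil a \<phi> t (s * t))\<bar> \<le> cmod (conv_dil a \<phi> t (s * t))"
    by (rule cmod_Re_bound[OF w])
  ultimately have "(1/t) * \<bar>c (n - 1) * \<mu> + (LINT y|lborel. a y * E y)\<bar> \<le> cmod (conv_dil a \<phi> t (s * t))"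
    using t by (simp add: abs_mult)
  moreover have "(1/t) * (\<bar>c (n - 1) * \<mu>\<bar> - K * M * (R/t)^n * (2*R)) \<le> (1/t) * \<bar>c (n - 1) * \<mu> + (LINT y|lborel. a y * E y)\<bar>"
    using Eint t by (intro mult_left_mono) auto
  ultimately show ?thesis unfolding c_def g_def by linarith
qed



lemma enn_powr_lower:
  assumes "ennreal r \<le> y" "0 \<le> r" "0 < q"
  shows "ennreal (r powr q) \<le> enn_powr y q"
proof (cases "y = top")
  case True then show ?thesis by (simp add: enn_powr_def)
next
  case False
  then have "r \<le> enn2real y"
    using assms enn2real_mono[of "ennreal r" y] by (simp add: top.not_eq_extremum)
  then have "r powr q \<le> enn2real y powr q" using assms by (intro powr_mono2) auto
  then show ?thesis using False by (simp add: enn_powr_def)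
qed

lemma one_plus_enn_powr:
  assumes "ennreal J \<le> X" "0 \<le> J" "1 \<le> q"
  shows "ennreal J \<le> 1 + enn_powr X q"
proof (cases "X = top")
  case True then show ?thesis by (simp add: enn_powr_def)
next
  case False
  define x where "x = enn2real X"
  have Jx: "J \<le> x" unfolding x_def
    using assms False enn2real_mono[of "ennreal J" X] by (simp add: top.not_eq_extremum)
  have E: "enn_powr X q = ennreal (x powr q)" using False by (simp add: enn_powr_def x_def)
  show ?thesis
  proof (cases "x \<ge> 1")
    case True
    then have "x powr 1 \<le> x powr q" using assms by (intro powr_mono) auto
    then have "J \<le> x powr q" using Jx True by simp
    then have "ennreal J \<le> ennreal (x powr q)" by (rule ennreal_leI)
    also have "\<dots> \<le> 1 + ennreal (x powr q)" by simp
    finally show ?thesis using E by simp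
  next
    case False
    then have "ennreal J \<le> 1" using Jx by (simp add: ennreal_le_1)
    also have "(1::ennreal) \<le> 1 + enn_powr X q" by simp
    finally show ?thesis .
  qed
qed

lemma integral_log:
  fixes s D T0 :: real
  assumes T: "0 < T0" "T0 \<le> 1/2" and s: "s \<noteq> 0" and D: "D \<ge> 0"
  shows "(\<integral>\<^sup>+ x. ennreal (indicator {T0..1/2} (x/s) * (D / (x/s))) \<partial>lborel) = ennreal (\<bar>s\<bar> * (D * (ln (1/2) - ln T0)))"
proof -
  have "(\<integral>\<^sup>+ x. ennreal (indicator {T0..1/2} (x/s) * (D / (x/s))) \<partial>lborel)
      = \<bar>s\<bar> * (\<integral>\<^sup>+ y. ennreal (indicator {T0..1/2} ((0 + s * y)/s) * (D / ((0 + s * y)/s))) \<partial>lborel)"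
    by (rule nn_integral_real_affine[OF _ s]) measurable
  also have "(\<integral>\<^sup>+ y. ennreal (indicator {T0..1/2} ((0 + s * y)/s) * (D / ((0 + s * y)/s))) \<partial>lborel)
      = (\<integral>\<^sup>+ y. ennreal (indicator {T0..1/2} y * (D / y)) \<partial>lborel)"
    using s by simp
  also have "\<dots> = ennreal (D * (ln (1/2) - ln T0))"
  proof (rule nn_integral_has_integral_lebesgue)
    show "\<And>x. x \<in> {T0..1/2} \<Longrightarrow> 0 \<le> D / x" using D T by auto
    have "((\<lambda>y. D / y) has_integral (D * ln (1/2) - D * ln T0)) {T0..1/2}"
    proof (rule fundamental_theorem_of_calculus)
      show "T0 \<le> 1/2" by fact
      fix x assume x: "x \<in> {T0..1/2}"
      then have "x > 0" using T by auto
      then have "((\<lambda>y. D * ln y) has_real_derivative D * (1 / x)) (at x)"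
        by (auto intro!: derivative_eq_intros)
      then show "((\<lambda>y. D * ln y) has_vector_derivative D / x) (at x within {T0..1/2})"
        by (simp add: has_real_derivative_iff_has_vector_derivative[symmetric] has_field_derivative_at_within)
    qed
    then show "((\<lambda>y. D / y) has_integral (D * (ln (1/2) - ln T0))) {T0..1/2}"
      by (simp add: algebra_simps)
  qed
  finally have *: "(\<integral>\<^sup>+ x. ennreal (indicator {T0..1/2} (x/s) * (D / (x/s))) \<partial>lborel) = ennreal \<bar>s\<bar> * ennreal (D * (ln (1/2) - ln T0))" .
  have "ln T0 \<le> ln (1/2)" using T by simp
  then have "0 \<le> D * (ln (1/2) - ln T0)" using D by simp
  then show ?thesis unfolding * by (simp add: ennreal_mult)
qed



lemma atom:
  fixes k :: nat and r c :: real
  assumes k: "k \<ge> 2" and r: "r > 0" and c: "0 \<le> c" "c \<le> 1"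
    and R: "R = 2^(k-2) * r" and d: "d = 2*R/real k"
    and a: "a = (\<lambda>y. c * (-1)^(k-1) * (1/R^k) * (1/2^(k-1)) * fd R d (k-1) y)"
  shows "a \<in> borel_measurable borel" "\<And>y. a y \<noteq> 0 \<Longrightarrow> y \<in> {-R..R}" "\<And>y. \<bar>a y\<bar> \<le> 1/R^k"
    "\<And>l. l < k \<Longrightarrow> (LINT y|lborel. a y * y^l) = (if l = k-1 then (2 * fact (k-1) / real k ^ k) * c else 0)"
proof -
  have Rp: "R > 0" using R r by simp
  have dp: "d > 0" using d Rp k by simp
  show "a \<in> borel_measurable borel" unfolding a by measurable
  show "\<And>y. a y \<noteq> 0 \<Longrightarrow> y \<in> {-R..R}"
  proof -
    fix y assume "a y \<noteq> 0"
    then have "fd R d (k-1) y \<noteq> 0" unfolding a by auto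
    from fd_supp[OF dp this] have "-R \<le> y \<and> y < -R + (real (k-1) + 1) * d" .
    moreover have "(real (k-1) + 1) * d = 2 * R" using k d by (simp add: of_nat_diff)
    ultimately show "y \<in> {-R..R}" by auto
  qed
  show "\<And>y. \<bar>a y\<bar> \<le> 1/R^k"
  proof -
    fix y
    have "\<bar>a y\<bar> = c * (1/R^k) * (\<bar>fd R d (k-1) y\<bar> / 2^(k-1))"
      unfolding a using c Rp by (simp add: abs_mult power_abs)
    also have "\<dots> \<le> 1 * (1/R^k) * 1"
      using c Rp fd_bound[of R d "k-1" y] by (intro mult_mono) auto
    finally show "\<bar>a y\<bar> \<le> 1/R^k" by simp
  qed
  fix l assume l: "l < k"
  define coef where "coef = c * (-1)^(k-1) * (1/R^k) * (1/2^(k-1))"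
  have "(LINT y|lborel. a y * y^l) = coef * fmom R d (k-1) l"
    unfolding a fmom_def coef_def by (simp add: mult.assoc)
  also have "\<dots> = (if l = k-1 then (2 * fact (k-1) / real k ^ k) * c else 0)"
  proof (cases "l = k - 1")
    case False
    then have "l < k - 1" using l by simp
    then show ?thesis using fmom_main[OF dp, of "k-1" R] False by simp
  next
    case True
    obtain m where m: "k = Suc m" using k by (cases k) auto
    have "coef * fmom R d (k-1) l = coef * ((-d)^m * fact m * d)"
      using fmom_main[OF dp, of "k-1" R] True m by simp
    also have "\<dots> = c * ((-1)^m * (-d)^m) * d / R^(Suc m) / 2^m * fact m"
      unfolding coef_def m by (simp add: field_simps)
    also have "(-1)^m * (-d)^m = d^m" by (simp add: power_mult_distrib[symmetric])
    also have "c * d^m * d / R^(Suc m) / 2^m * fact m = c * (d / R)^(Suc m) / 2^m * fact m"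
      using Rp by (simp add: power_divide field_simps)
    also have "d / R = 2 / real (Suc m)" using d m Rp by simp
    also have "c * (2 / real (Suc m))^(Suc m) / 2^m * fact m = c * ((2::real)^(Suc m) / 2^m) * fact m / real (Suc m)^(Suc m)"
      by (simp add: power_divide)
    also have "(2::real)^(Suc m) / 2^m = 2" by simp
    also have "c * 2 * fact m / real (Suc m)^(Suc m) = (2 * fact m / real (Suc m) ^ Suc m) * c"
      by simp
    finally show ?thesis using True m by simp
  qed
  finally show "(LINT y|lborel. a y * y^l) = (if l = k-1 then (2 * fact (k-1) / real k ^ k) * c else 0)" .
qed



lemma neg_c_ln_c: "0 < c \<Longrightarrow> c \<le> 1 \<Longrightarrow> - (c * ln c) \<le> (1::real)"
proof -
  assume c: "0 < c" "c \<le> 1"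
  have "ln (1/c) \<le> 1/c - 1" using c by (intro ln_le_minus_one) auto
  then have "- ln c \<le> 1/c - 1" using c by (simp add: ln_div)
  then have "c * (- ln c) \<le> c * (1/c - 1)" using c by (intro mult_left_mono) auto
  also have "\<dots> = 1 - c" using c by (simp add: field_simps)
  finally show ?thesis using c by simp
qed

lemma pw_alg:
  fixes t A c M R :: real and k :: nat
  assumes k: "k \<ge> 1" and t: "t > 0" and A: "A * c > 0" and T: "4*M*R/(A*c) \<le> t"
  shows "A*c/(2*t^k) \<le> (1/t) * (A*c/t^(k-1) - 2*M*R/t^k)"
proof -
  obtain m where m: "k = Suc m" using k by (cases k) auto
  define u where "u = t^m"
  have u: "u > 0" using t unfolding u_def by simp
  have tk: "t^k = t * u" unfolding u_def m by simp
  have "4*M*R \<le> A*c*t" using T A by (simp add: divide_le_eq mult.commute)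
  then have "2*M*R/t \<le> A*c/2" using t by (simp add: divide_le_eq field_simps)
  then have "A*c/2 \<le> A*c - 2*M*R/t" by linarith
  then have "(A*c/2) / (t*u) \<le> (A*c - 2*M*R/t) / (t*u)" using t u by (intro divide_right_mono) auto
  also have "(A*c - 2*M*R/t) / (t*u) = (1/t) * (A*c/u - 2*M*R/(t*u))"
    using t u by (simp add: field_simps)
  finally show ?thesis unfolding tk using m u_def by (simp add: field_simps)
qed



theorem mainTheorem2:
  fixes k :: nat and \<phi> :: "real \<Rightarrow> complex"
  assumes "k \<ge> 2"
    and "schwartz \<phi>"
    and "integral\<^sup>L lborel \<phi> \<noteq> 0"
  shows "\<exists>Ck Ck'. Ck > 0 \<and> Ck' > 0 \<and>
    (\<forall>r c. 0 < r \<and> r < 2 powr (1 - real k) \<and> 0 \<le> c \<and> c \<le> 1 \<longrightarrow>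
      (\<exists>a :: real \<Rightarrow> real. a \<in> borel_measurable lborel \<and>
         (\<forall>t. a t \<noteq> 0 \<longrightarrow> \<bar>t\<bar> \<le> 2 ^ (k - 2) * r) \<and>
         (AE t in lborel. \<bar>a t\<bar> \<le> (2 ^ (k - 2) * r) powr (- real k)) \<and>
         (\<forall>l \<le> k - 2. (LINT t|lborel. a t * t ^ l) = 0) \<and>
         (LINT t|lborel. a t * t ^ (k - 1)) = Ck * c \<and>
         ennreal (c * \<bar>ln r\<bar>) \<le> ennreal Ck' * (1 + hp_norm \<phi> (1 / real k) a)))"
proof -
  note S = assms(2)
  have k1: "k \<ge> 1" using assms(1) by simp
  obtain s where s0: "s \<noteq> 0" and zs: "iter_vderiv \<phi> (k-1) s \<noteq> 0"
    using nonvanish[OF assms(2,3)] by blast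
  define z where "z = iter_vderiv \<phi> (k-1) s"
  define z0 where "z0 = cmod z"
  have z0p: "z0 > 0" using zs unfolding z0_def z_def by simp
  define w where "w = cnj z / complex_of_real z0"
  have wn: "cmod w \<le> 1" unfolding w_def using z0p by (simp add: norm_divide z0_def)
  have gdz: "gd w \<phi> (k-1) s = z0"
  proof -
    have "w * iter_vderiv \<phi> (k-1) s = (z * cnj z) / complex_of_real z0"
      unfolding w_def z_def by (simp add: mult.commute)
    also have "z * cnj z = complex_of_real (z0^2)"
      unfolding complex_mult_cnj z0_def cmod_power2 by simp
    finally show ?thesis unfolding gd_def using z0p by (simp add: power2_eq_square)
  qed
  obtain B where B: "\<And>x. \<bar>x\<bar> ^ 0 * cmod (iter_vderiv \<phi> k x) \<le> B"
    using S unfolding schwartz_def by blast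
  define M where "M = max B 1"
  have Mp: "M > 0" unfolding M_def by simp
  have MB: "\<And>x. cmod (iter_vderiv \<phi> k x) \<le> M" using B unfolding M_def by (metis max.coboundedI1 mult_1 power_0)
  define Ck where "Ck = 2 * fact (k-1) / real k ^ k"
  have Ckp: "Ck > 0" unfolding Ck_def using k1 by simp
  define A where "A = z0 * Ck / fact (k-1)"
  have Ap: "A > 0" unfolding A_def using z0p Ckp by simp
  define \<alpha> where "\<alpha> = (A/2) powr (1/real k) * \<bar>s\<bar>"
  have \<alpha>p: "\<alpha> > 0" unfolding \<alpha>_def using Ap s0 by simp
  define \<gamma> where "\<gamma> = ln 2 + ln (4*M*2^(k-2)/A)"
  define Ck' where "Ck' = 1/\<alpha> + 1 + \<bar>\<gamma>\<bar>"
  have Ck'p: "Ck' > 0" unfolding Ck'_def using \<alpha>p by (simp add: add_pos_nonneg)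
  have key: "\<exists>a :: real \<Rightarrow> real. a \<in> borel_measurable lborel \<and>
         (\<forall>t. a t \<noteq> 0 \<longrightarrow> \<bar>t\<bar> \<le> 2 ^ (k - 2) * r) \<and>
         (AE t in lborel. \<bar>a t\<bar> \<le> (2 ^ (k - 2) * r) powr (- real k)) \<and>
         (\<forall>l \<le> k - 2. (LINT t|lborel. a t * t ^ l) = 0) \<and>
         (LINT t|lborel. a t * t ^ (k - 1)) = Ck * c \<and>
         ennreal (c * \<bar>ln r\<bar>) \<le> ennreal Ck' * (1 + hp_norm \<phi> (1 / real k) a)"
    if rc: "0 < r \<and> r < 2 powr (1 - real k) \<and> 0 \<le> c \<and> c \<le> 1" for r c :: real
  proof -
    from rc have r: "r > 0" and c0: "0 \<le> c" and c1: "c \<le> 1" by auto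
    define R where "R = 2^(k-2) * r"
    define d where "d = 2*R/real k"
    define a where "a = (\<lambda>y. c * (-1)^(k-1) * (1/R^k) * (1/2^(k-1)) * fd R d (k-1) y)"
    have Rp: "R > 0" unfolding R_def using r by simp
    note at = atom[OF assms(1) r c0 c1 R_def d_def a_def]
    have mom: "\<And>l. l < k \<Longrightarrow> (LINT y|lborel. a y * y^l) = (if l = k-1 then Ck * c else 0)"
      using at(4) unfolding Ck_def by simp
    show "\<exists>a :: real \<Rightarrow> real. a \<in> borel_measurable lborel \<and>
         (\<forall>t. a t \<noteq> 0 \<longrightarrow> \<bar>t\<bar> \<le> 2 ^ (k - 2) * r) \<and>
         (AE t in lborel. \<bar>a t\<bar> \<le> (2 ^ (k - 2) * r) powr (- real k)) \<and>
         (\<forall>l \<le> k - 2. (LINT t|lborel. a t * t ^ l) = 0) \<and>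
         (LINT t|lborel. a t * t ^ (k - 1)) = Ck * c \<and>
         ennreal (c * \<bar>ln r\<bar>) \<le> ennreal Ck' * (1 + hp_norm \<phi> (1 / real k) a)"
      (is "\<exists>a. ?P a")
    proof -
      have h1: "a \<in> borel_measurable lborel" using at(1) by (simp add: measurable_lborel1)
      have h2: "\<forall>t. a t \<noteq> 0 \<longrightarrow> \<bar>t\<bar> \<le> 2 ^ (k - 2) * r" using at(2) unfolding R_def by force
      have "(2 ^ (k - 2) * r) powr (- real k) = 1/R^k"
        unfolding R_def[symmetric] using Rp by (simp add: powr_minus powr_realpow divide_inverse)
      then have h3: "AE t in lborel. \<bar>a t\<bar> \<le> (2 ^ (k - 2) * r) powr (- real k)"
        using at(3) by simp
      have h4: "\<forall>l \<le> k - 2. (LINT t|lborel. a t * t ^ l) = 0"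
      proof (intro allI impI)
        fix l :: nat assume "l \<le> k - 2"
        then have "l < k" "l \<noteq> k - 1" using assms(1) by arith+
        then show "(LINT t|lborel. a t * t ^ l) = 0" using mom by simp
      qed
      have h5: "(LINT t|lborel. a t * t ^ (k - 1)) = Ck * c" using mom k1 by simp
      have h6: "ennreal (c * \<bar>ln r\<bar>) \<le> ennreal Ck' * (1 + hp_norm \<phi> (1 / real k) a)"
      proof (cases "c = 0")
        case True then show ?thesis by simp
      next
        case False
        then have cp: "c > 0" using c0 by simp
        have "2 powr (1 - real k) \<le> 2 powr 0" using k1 by (intro powr_mono) auto
        then have r1: "r < 1" using rc by simp
        then have L: "\<bar>ln r\<bar> = - ln r" using r by simp
        define T0 where "T0 = 4*M*R/(A*c)"
        have T0p: "T0 > 0" unfolding T0_def using Mp Rp Ap cp by simp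
        define D where "D = (A*c/2) powr (1/real k)"
        define H where "H = hp_norm \<phi> (1 / real k) a"
        define X where "X = (\<integral>\<^sup>+ x. enn_powr (loc_max \<phi> a x) (1/real k) \<partial>lborel)"
        have HX: "H = enn_powr X (real k)" unfolding H_def hp_norm_def X_def by simp
        have pw: "A*c/(2*t^k) \<le> cmod (conv_dil a \<phi> t (s*t))" if t: "T0 \<le> t" "t \<le> 1/2" for t
        proof -
          have tp: "t > 0" using t T0p by simp
          have cl: "(1/t) * (\<bar>gd w \<phi> (k-1) s / fact (k-1) * (-1/t)^(k-1) * (Ck * c)\<bar> - (1/R^k) * M * (R/t)^k * (2*R))
              \<le> cmod (conv_dil a \<phi> t (s * t))"
            by (rule conv_lower[OF S at(1) at(2) at(3) k1 less_imp_le[OF Rp] mom wn MB tp])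
          have e1: "\<bar>gd w \<phi> (k-1) s / fact (k-1) * (-1/t)^(k-1) * (Ck * c)\<bar> = A*c/t^(k-1)"
            unfolding gdz A_def using z0p Ckp cp tp by (simp add: abs_mult power_abs power_one_over mult.commute mult.left_commute)
          have e2: "(1/R^k) * M * (R/t)^k * (2*R) = 2*M*R/t^k"
            using Rp tp by (simp add: power_divide)
          have "A*c/(2*t^k) \<le> (1/t) * (A*c/t^(k-1) - 2*M*R/t^k)"
            by (rule pw_alg[OF k1 tp]) (use Ap cp t in \<open>auto simp: T0_def\<close>)
          then show ?thesis using cl unfolding e1 e2 by linarith
        qed
        have main: "\<exists>J \<ge> 0. ennreal J \<le> 1 + H \<and> c * (- ln r) \<le> Ck' * max 1 J"
        proof -
          define Y where "Y = ln (1/2) - ln T0"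
          have Yeq: "Y = - ln r + ln c - \<gamma>"
          proof -
            have "T0 = (4*M*2^(k-2)/A) * r / c" unfolding T0_def R_def by simp
            then have "ln T0 = ln (4*M*2^(k-2)/A) + ln r - ln c"
              using Mp Ap r cp by (simp add: ln_mult ln_div)
            then show ?thesis unfolding Y_def \<gamma>_def by (simp add: ln_div)
          qed
          have ident: "c * (- ln r) = c * Y - c * ln c + c * \<gamma>" unfolding Yeq by (simp add: algebra_simps)
          have cl: "- (c * ln c) \<le> 1" by (rule neg_c_ln_c[OF cp c1])
          have cg: "c * \<gamma> \<le> \<bar>\<gamma>\<bar>"
          proof -
            have "c * \<gamma> \<le> c * \<bar>\<gamma>\<bar>" using c0 by (intro mult_left_mono) auto
            also have "\<dots> \<le> 1 * \<bar>\<gamma>\<bar>" using c1 by (intro mult_right_mono) auto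
            finally show ?thesis by simp
          qed
          show ?thesis
          proof (cases "T0 \<le> 1/2")
            case False
            then have "Y < 0" unfolding Y_def using T0p by simp
            then have "c * Y \<le> 0" using cp by (simp add: mult_nonneg_nonpos)
            then have "c * (- ln r) \<le> 1 + \<bar>\<gamma>\<bar>" using ident cl cg by linarith
            also have "\<dots> \<le> Ck' * max 1 0" unfolding Ck'_def using \<alpha>p by simp
            finally show ?thesis by (intro exI[of _ 0]) auto
          next
            case True
            have Y0: "Y \<ge> 0" unfolding Y_def using True T0p by simp
            define J where "J = \<bar>s\<bar> * (D * Y)"
            have D0: "D \<ge> 0" unfolding D_def by simp
            have J0: "J \<ge> 0" unfolding J_def using D0 Y0 by simp
            have ptw: "ennreal (indicator {T0..1/2} (x/s) * (D / (x/s))) \<le> enn_powr (loc_max \<phi> a x) (1/real k)" for x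
            proof (cases "x/s \<in> {T0..1/2}")
              case False then show ?thesis by simp
            next
              case True
              define t where "t = x/s"
              have t: "T0 \<le> t" "t \<le> 1/2" using True unfolding t_def by auto
              have tp: "t > 0" using t T0p by simp
              have xst: "x = s * t" unfolding t_def using s0 by simp
              have "ennreal (A*c/(2*t^k)) \<le> ennreal (cmod (conv_dil a \<phi> t x))"
                using pw[OF t] xst by (intro ennreal_leI) simp
              also have "\<dots> \<le> loc_max \<phi> a x"
                unfolding loc_max_def using tp t by (intro SUP_upper) auto
              finally have "ennreal ((A*c/(2*t^k)) powr (1/real k)) \<le> enn_powr (loc_max \<phi> a x) (1/real k)"
                using Ap cp tp k1 by (intro enn_powr_lower) auto
              moreover have "(A*c/(2*t^k)) powr (1/real k) = D / t"
              proof -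
                have "(A*c/(2*t^k)) = (A*c/2) / (t powr real k)" using tp by (simp add: powr_realpow)
                then have "(A*c/(2*t^k)) powr (1/real k) = D / ((t powr real k) powr (1/real k))"
                  unfolding D_def by (simp only: powr_divide)
                also have "(t powr real k) powr (1/real k) = t" using k1 tp by (simp add: powr_powr)
                finally show ?thesis .
              qed
              ultimately show ?thesis using True unfolding t_def by simp
            qed
            have "ennreal J = (\<integral>\<^sup>+ x. ennreal (indicator {T0..1/2} (x/s) * (D / (x/s))) \<partial>lborel)"
              unfolding J_def by (rule integral_log[OF T0p True s0 D0, folded Y_def, symmetric])
            also have "\<dots> \<le> X" unfolding X_def by (intro nn_integral_mono ptw)
            finally have JX: "ennreal J \<le> X" .
            have JH: "ennreal J \<le> 1 + H" unfolding HX using one_plus_enn_powr[OF JX J0] k1 by simp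
            have "D = (A/2) powr (1/real k) * c powr (1/real k)" unfolding D_def
              by (simp add: powr_mult[symmetric] mult.commute mult.left_commute)
            moreover have "c powr 1 \<le> c powr (1/real k)" using c0 c1 k1 by (intro powr_mono') auto
            ultimately have Dge: "D \<ge> (A/2) powr (1/real k) * c" using cp by (simp add: mult_left_mono)
            have "J \<ge> \<alpha> * (c * Y)"
            proof -
              have "((A/2) powr (1/real k) * c) * Y \<le> D * Y" using Y0 by (rule mult_right_mono[OF Dge])
              then have "\<bar>s\<bar> * (((A/2) powr (1/real k) * c) * Y) \<le> \<bar>s\<bar> * (D * Y)" by (intro mult_left_mono) auto
              then show ?thesis unfolding J_def \<alpha>_def by (simp add: mult_ac)
            qed
            then have "c * Y \<le> J / \<alpha>" using \<alpha>p by (simp add: field_simps)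
            then have "c * (- ln r) \<le> J / \<alpha> + (1 + \<bar>\<gamma>\<bar>)" using ident cl cg by linarith
            also have "\<dots> \<le> (1/\<alpha>) * max 1 J + (1 + \<bar>\<gamma>\<bar>) * max 1 J"
            proof -
              have "J / \<alpha> \<le> (1/\<alpha>) * max 1 J" using \<alpha>p by (simp add: divide_right_mono)
              moreover have "(1 + \<bar>\<gamma>\<bar>) \<le> (1 + \<bar>\<gamma>\<bar>) * max 1 J" by (simp add: mult_le_cancel_left1)
              ultimately show ?thesis by linarith
            qed
            also have "\<dots> = Ck' * max 1 J" unfolding Ck'_def by (simp add: algebra_simps)
            finally show ?thesis using J0 JH by blast
          qed
        qed
        then obtain J where J0: "J \<ge> 0" and JH: "ennreal J \<le> 1 + H" and ineq: "c * (- ln r) \<le> Ck' * max 1 J"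
          by blast
        have "ennreal (c * \<bar>ln r\<bar>) \<le> ennreal (Ck' * max 1 J)" unfolding L using ineq by (rule ennreal_leI)
        also have "\<dots> = ennreal Ck' * ennreal (max 1 J)" using Ck'p by (simp add: ennreal_mult)
        also have "ennreal (max 1 J) \<le> 1 + H"
        proof (cases "J \<le> 1")
          case True then show ?thesis by (simp add: max_def)
        next
          case False then show ?thesis using JH by (simp add: max_def)
        qed
        then have "ennreal Ck' * ennreal (max 1 J) \<le> ennreal Ck' * (1 + H)" by (rule mult_left_mono) simp
        finally show ?thesis unfolding H_def .
      qed
      have "?P a" using h1 h2 h3 h4 h5 h6 by (intro conjI)
      then show ?thesis by blast
    qed
  qed
  show ?thesis by (rule exI[of _ Ck], rule exI[of _ Ck'], rule conjI[OF Ckp conjI[OF Ck'p]], intro allI impI, rule key)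
qed

end
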